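(* Let $F$ be a nondyadic nonarchimedean local field (so $2$ is a unit in its ring of integers $R$). Then for every positive integer $n$, $u^\ast_R(n) = 2n$; that is, the minimal rank of a primitively $n$-universal $R$-lattice is exactly $2n$.
   Context: $F$ is a nonarchimedean local field of characteristic not $2$ with ring of integers $R$. An $R$-lattice is a finitely generated $R$-submodule $L$ of a quadratic space $(V,B)$ over $F$, with $Q(v)=B(v,v)$; all lattices are assumed integral ($B(L,L)\subseteq R$) and nondegenerate (Gram matrix nonsingular). A representation of $L$ into $M$ is an $R$-linear map $\sigma:L\to M$ with $B(\sigma v,\sigma v')=B(v,v')$; it is primitive if $\sigma(L)$ is a direct summand of $M$. An $R$-lattice is primitively $n$-universal if it primitively represents every (integral, nondegenerate) $R$-lattice of rank $n$. $u^\ast_R(n)$ denotes the minimal rank of a primitively $n$-universal $R$-lattice. *)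

theory Defs
  imports "Jordan_Normal_Form.Determinant"
begin

(* Normalized discrete valuation on a field, given on nonzero elements
   (the value at 0 is irrelevant; it plays the role of +infinity). *)
definition discrete_valuation :: "('a::field \<Rightarrow> int) \<Rightarrow> bool" where
  "discrete_valuation v \<longleftrightarrow>
     (\<forall>x y. x \<noteq> 0 \<longrightarrow> y \<noteq> 0 \<longrightarrow> v (x * y) = v x + v y) \<and>
     (\<forall>x y. x \<noteq> 0 \<longrightarrow> y \<noteq> 0 \<longrightarrow> x + y \<noteq> 0 \<longrightarrow> min (v x) (v y) \<le> v (x + y)) \<and>
     (\<exists>p. p \<noteq> 0 \<and> v p = 1)"

definition vge :: "('a::field \<Rightarrow> int) \<Rightarrow> 'a \<Rightarrow> int \<Rightarrow> bool" where
  "vge v x N \<longleftrightarrow> x = 0 \<or> N \<le> v x"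

definition intR :: "('a::field \<Rightarrow> int) \<Rightarrow> 'a \<Rightarrow> bool" where
  "intR v x \<longleftrightarrow> vge v x 0"

definition val_complete :: "('a::field \<Rightarrow> int) \<Rightarrow> bool" where
  "val_complete v \<longleftrightarrow>
     (\<forall>s :: nat \<Rightarrow> 'a. (\<forall>N. \<exists>K. \<forall>i\<ge>K. \<forall>j\<ge>K. vge v (s i - s j) N) \<longrightarrow>
        (\<exists>l. \<forall>N. \<exists>K. \<forall>i\<ge>K. vge v (s i - l) N))"

(* the residue field R / pi R is finite *)
definition finite_residue_field :: "('a::field \<Rightarrow> int) \<Rightarrow> bool" where
  "finite_residue_field v \<longleftrightarrow>
     (\<exists>S. finite S \<and> (\<forall>x. intR v x \<longrightarrow> (\<exists>s\<in>S. intR v s \<and> vge v (x - s) 1)))"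

definition nonarch_local_field :: "('a::field \<Rightarrow> int) \<Rightarrow> bool" where
  "nonarch_local_field v \<longleftrightarrow> discrete_valuation v \<and> val_complete v \<and> finite_residue_field v"

definition nondyadic :: "('a::field \<Rightarrow> int) \<Rightarrow> bool" where
  "nondyadic v \<longleftrightarrow> (2::'a) \<noteq> 0 \<and> v 2 = 0"

(* An integral nondegenerate R-lattice of rank n, given by its Gram matrix
   with respect to an R-basis. *)
definition R_lattice :: "('a::field \<Rightarrow> int) \<Rightarrow> nat \<Rightarrow> 'a mat \<Rightarrow> bool" where
  "R_lattice v n A \<longleftrightarrow> A \<in> carrier_mat n n \<and> transpose_mat A = A \<and>
     (\<forall>i<n. \<forall>j<n. intR v (A $$ (i, j))) \<and> det A \<noteq> 0"

definition R_vecs :: "('a::field \<Rightarrow> int) \<Rightarrow> nat \<Rightarrow> 'a vec set" where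
  "R_vecs v m = {x \<in> carrier_vec m. \<forall>i<m. intR v (x $ i)}"

definition R_submodule :: "('a::field \<Rightarrow> int) \<Rightarrow> nat \<Rightarrow> 'a vec set \<Rightarrow> bool" where
  "R_submodule v m N \<longleftrightarrow> N \<subseteq> R_vecs v m \<and> 0\<^sub>v m \<in> N \<and>
     (\<forall>x\<in>N. \<forall>y\<in>N. x + y \<in> N) \<and> (\<forall>c x. intR v c \<longrightarrow> x \<in> N \<longrightarrow> c \<cdot>\<^sub>v x \<in> N)"

definition direct_summand :: "('a::field \<Rightarrow> int) \<Rightarrow> nat \<Rightarrow> 'a vec set \<Rightarrow> bool" where
  "direct_summand v m S \<longleftrightarrow> (\<exists>N. R_submodule v m N \<and> S \<inter> N = {0\<^sub>v m} \<and>
     R_vecs v m = {x + y | x y. x \<in> S \<and> y \<in> N})"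

(* A representation of L (Gram matrix A, rank n) into M (Gram matrix B, rank m):
   an R-linear map R^n \<rightarrow> R^m, i.e. an m x n matrix X over R, preserving B. *)
definition representation :: "('a::field \<Rightarrow> int) \<Rightarrow> 'a mat \<Rightarrow> 'a mat \<Rightarrow> 'a mat \<Rightarrow> bool" where
  "representation v A B X \<longleftrightarrow> X \<in> carrier_mat (dim_row B) (dim_row A) \<and>
     (\<forall>i<dim_row B. \<forall>j<dim_row A. intR v (X $$ (i, j))) \<and>
     transpose_mat X * B * X = A"

definition rep_image :: "('a::field \<Rightarrow> int) \<Rightarrow> 'a mat \<Rightarrow> 'a vec set" where
  "rep_image v X = {X *\<^sub>v c | c. c \<in> R_vecs v (dim_col X)}"

definition primitive_representation :: "('a::field \<Rightarrow> int) \<Rightarrow> 'a mat \<Rightarrow> 'a mat \<Rightarrow> 'a mat \<Rightarrow> bool" where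
  "primitive_representation v A B X \<longleftrightarrow> representation v A B X \<and>
     direct_summand v (dim_row B) (rep_image v X)"

definition prim_n_universal :: "('a::field \<Rightarrow> int) \<Rightarrow> nat \<Rightarrow> 'a mat \<Rightarrow> bool" where
  "prim_n_universal v n B \<longleftrightarrow>
     (\<forall>A. R_lattice v n A \<longrightarrow> (\<exists>X. primitive_representation v A B X))"

definition u_star :: "('a::field \<Rightarrow> int) \<Rightarrow> nat \<Rightarrow> nat" where
  "u_star v n = (LEAST m. \<exists>B. R_lattice v m B \<and> prim_n_universal v n B)"

end

theory Submission
  imports Defs
begin

section \<open>Valuation basics\<close>

lemma dv_mult: "discrete_valuation v \<Longrightarrow> x \<noteq> 0 \<Longrightarrow> y \<noteq> 0 \<Longrightarrow> v (x * y) = v x + v y"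
  unfolding discrete_valuation_def by blast

lemma dv_add: "discrete_valuation v \<Longrightarrow> x \<noteq> 0 \<Longrightarrow> y \<noteq> 0 \<Longrightarrow> x + y \<noteq> 0 \<Longrightarrow> min (v x) (v y) \<le> v (x + y)"
  unfolding discrete_valuation_def by blast

lemma dv_one: assumes "discrete_valuation v" shows "v 1 = 0"
  using dv_mult[OF assms, of 1 1] by simp

lemma dv_mone: assumes "discrete_valuation v" shows "v (-1) = 0"
  using dv_mult[OF assms, of "-1" "-1"] dv_one[OF assms] by simp

lemma dv_neg: assumes "discrete_valuation v" "x \<noteq> 0" shows "v (- x) = v x"
  using dv_mult[OF assms(1), of "-1" x] dv_mone[OF assms(1)] assms(2) by simp

lemma dv_power: assumes "discrete_valuation v" "x \<noteq> 0" shows "v (x ^ k) = int k * v x"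
  using assms by (induction k) (auto simp: dv_one dv_mult algebra_simps)

lemma vge_add: assumes "discrete_valuation v" "vge v x N" "vge v y N" shows "vge v (x + y) N"
proof (cases "x = 0 \<or> y = 0 \<or> x + y = 0")
  case True then show ?thesis using assms unfolding vge_def by auto
next
  case False
  then have "min (v x) (v y) \<le> v (x + y)" using dv_add[OF assms(1), of x y] by auto
  then show ?thesis using assms False unfolding vge_def by auto
qed

lemma vge_mult: assumes "discrete_valuation v" "vge v x N" "vge v y M" shows "vge v (x * y) (N + M)"
proof (cases "x = 0 \<or> y = 0")
  case True then show ?thesis unfolding vge_def by auto
next
  case False
  then show ?thesis using assms dv_mult[OF assms(1), of x y] unfolding vge_def by auto
qed

lemma vge_neg: assumes "discrete_valuation v" "vge v x N" shows "vge v (- x) N"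
proof (cases "x = 0")
  case True then show ?thesis unfolding vge_def by auto
next
  case False
  then show ?thesis using assms dv_neg[OF assms(1), of x] unfolding vge_def by auto
qed

lemma vge_diff: assumes "discrete_valuation v" "vge v x N" "vge v y N" shows "vge v (x - y) N"
  using vge_add[OF assms(1) assms(2) vge_neg[OF assms(1) assms(3)]] by simp

lemma vge_zero[simp]: "vge v 0 N" unfolding vge_def by simp

lemma vge_mono: "vge v x N \<Longrightarrow> M \<le> N \<Longrightarrow> vge v x M" unfolding vge_def by auto

lemma vge_sum: assumes "discrete_valuation v" "\<And>i. i \<in> S \<Longrightarrow> vge v (f i) N"
  shows "vge v (sum f S) N"
  using assms(2)
proof (induction S rule: infinite_finite_induct)
  case (insert x F) then show ?case using vge_add[OF assms(1)] by auto
qed auto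

lemma intR_one[simp]: "discrete_valuation v \<Longrightarrow> intR v 1"
  unfolding intR_def vge_def by (simp add: dv_one)

lemma intR_zero[simp]: "intR v 0"
  unfolding intR_def vge_def by simp

lemma intR_add: "discrete_valuation v \<Longrightarrow> intR v x \<Longrightarrow> intR v y \<Longrightarrow> intR v (x + y)"
  unfolding intR_def using vge_add by blast

lemma intR_mult: "discrete_valuation v \<Longrightarrow> intR v x \<Longrightarrow> intR v y \<Longrightarrow> intR v (x * y)"
  unfolding intR_def using vge_mult[of v x 0 y 0] by simp

lemma intR_neg: "discrete_valuation v \<Longrightarrow> intR v x \<Longrightarrow> intR v (- x)"
  unfolding intR_def using vge_neg by blast

lemma intR_diff: "discrete_valuation v \<Longrightarrow> intR v x \<Longrightarrow> intR v y \<Longrightarrow> intR v (x - y)"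
  unfolding intR_def using vge_diff by blast

lemma intR_sum: "discrete_valuation v \<Longrightarrow> (\<And>i. i \<in> S \<Longrightarrow> intR v (f i)) \<Longrightarrow> intR v (sum f S)"
  unfolding intR_def using vge_sum by blast

lemma intR_prod: assumes "discrete_valuation v" "\<And>i. i \<in> S \<Longrightarrow> intR v (f i)" shows "intR v (prod f S)"
  using assms(2)
proof (induction S rule: infinite_finite_induct)
  case (insert x F) then show ?case using intR_mult[OF assms(1)] by auto
qed (auto simp: assms(1))

lemma intR_signof: "discrete_valuation v \<Longrightarrow> intR v (signof p :: 'a::field)"
  by (auto simp: sign_def intro: intR_neg)

lemma intR_det: assumes dv: "discrete_valuation v" and A: "A \<in> carrier_mat k k"
  and ent: "\<And>i j. i < k \<Longrightarrow> j < k \<Longrightarrow> intR v (A $$ (i, j))"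
  shows "intR v (det A)"
  unfolding det_def'[OF A]
proof (rule intR_sum[OF dv])
  fix p assume p: "p \<in> {p. p permutes {0..<k}}"
  show "intR v (signof p * (\<Prod>i = 0..<k. A $$ (i, p i)))"
  proof (rule intR_mult[OF dv intR_signof[OF dv] intR_prod[OF dv]])
    fix i assume "i \<in> {0..<k}"
    then show "intR v (A $$ (i, p i))" using p ent permutes_in_image[of p "{0..<k}" i] by auto
  qed
qed

lemma intR_mult_mat_vec: assumes dv: "discrete_valuation v" and A: "A \<in> carrier_mat r c"
  and x: "x \<in> carrier_vec c"
  and ent: "\<And>i j. i < r \<Longrightarrow> j < c \<Longrightarrow> intR v (A $$ (i, j))"
  and xe: "\<And>j. j < c \<Longrightarrow> intR v (x $ j)" and i: "i < r"
  shows "intR v ((A *\<^sub>v x) $ i)"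
  using A x i by (auto simp: scalar_prod_def intro!: intR_sum[OF dv] intR_mult[OF dv] ent xe)

lemma intR_mult_mat: assumes dv: "discrete_valuation v" and A: "A \<in> carrier_mat r c"
  and B: "B \<in> carrier_mat c d"
  and ent: "\<And>i j. i < r \<Longrightarrow> j < c \<Longrightarrow> intR v (A $$ (i, j))"
  and entB: "\<And>i j. i < c \<Longrightarrow> j < d \<Longrightarrow> intR v (B $$ (i, j))" and i: "i < r" and j: "j < d"
  shows "intR v ((A * B) $$ (i, j))"
  using A B i j by (auto simp: scalar_prod_def intro!: intR_sum[OF dv] intR_mult[OF dv] ent entB)

section \<open>Upper bound: the hyperbolic lattice\<close>

definition hyp :: "nat \<Rightarrow> 'a::field mat" where
  "hyp n = four_block_mat (0\<^sub>m n n) (1\<^sub>m n) (1\<^sub>m n) (0\<^sub>m n n)"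

lemma hyp_carrier: "hyp n \<in> carrier_mat (2 * n) (2 * n)"
  unfolding hyp_def by (auto simp: mult_2)

lemma hyp_sq: "hyp n * hyp n = (1\<^sub>m (2 * n) :: 'a::field mat)"
proof -
  have "hyp n * hyp n = four_block_mat (1\<^sub>m n) (0\<^sub>m n n) (0\<^sub>m n n) (1\<^sub>m n :: 'a mat)"
    unfolding hyp_def by (subst mult_four_block_mat[OF zero_carrier_mat one_carrier_mat one_carrier_mat zero_carrier_mat zero_carrier_mat one_carrier_mat one_carrier_mat zero_carrier_mat]) auto
  also have "\<dots> = 1\<^sub>m (2 * n)"
    by (rule eq_matI) (auto simp: four_block_mat_def mult_2)
  finally show ?thesis .
qed

lemma hyp_det: "det (hyp n :: 'a::field mat) \<noteq> 0"
proof
  assume "det (hyp n :: 'a mat) = 0"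
  moreover have "det (hyp n * hyp n :: 'a mat) = det (hyp n) * det (hyp n)"
    by (rule det_mult[OF hyp_carrier hyp_carrier])
  ultimately have "det (hyp n * hyp n :: 'a mat) = 0" by simp
  then show False unfolding hyp_sq by simp
qed

lemma hyp_entries: "i < 2 * n \<Longrightarrow> j < 2 * n \<Longrightarrow> hyp n $$ (i, j) = 0 \<or> hyp n $$ (i, j) = 1"
  unfolding hyp_def four_block_mat_def by (auto simp: Let_def mult_2)

lemma hyp_lattice: assumes dv: "discrete_valuation v" shows "R_lattice v (2 * n) (hyp n)"
  unfolding R_lattice_def
proof (intro conjI allI impI)
  show "hyp n \<in> carrier_mat (2 * n) (2 * n)" by (rule hyp_carrier)
  show "transpose_mat (hyp n) = hyp n"
    unfolding hyp_def by (subst transpose_four_block_mat[OF zero_carrier_mat one_carrier_mat one_carrier_mat zero_carrier_mat]) auto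
  show "det (hyp n) \<noteq> 0" by (rule hyp_det)
  fix i j assume "i < 2 * n" "j < 2 * n"
  then have "hyp n $$ (i, j) = (0::'a) \<or> hyp n $$ (i, j) = 1" by (rule hyp_entries)
  then show "intR v (hyp n $$ (i, j))" using dv by (metis intR_zero intR_one)
qed

lemma intR_half: assumes dv: "discrete_valuation v" and nd: "nondyadic v" and x: "intR v x"
  shows "intR v (x / 2)"
proof -
  have two: "(2::'a) \<noteq> 0" "v 2 = 0" using nd unfolding nondyadic_def by auto
  have i2: "inverse (2::'a) \<noteq> 0" using two(1) by simp
  have e: "v (2 * inverse 2) = v 2 + v (inverse (2::'a))" by (rule dv_mult[OF dv two(1) i2])
  have "2 * inverse 2 = (1::'a)" using two(1) by (rule right_inverse)
  then have "v (2 * inverse 2) = 0" using dv_one[OF dv] by metis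
  then have "v (inverse (2::'a)) = 0" using e two(2) by (simp only:)
  then have "intR v (inverse (2::'a))" unfolding intR_def vge_def by (simp only: order_refl simp_thms)
  then have "intR v (x * inverse 2)" by (rule intR_mult[OF dv x])
  then show ?thesis by (simp only: divide_inverse)
qed

definition upperU :: "nat \<Rightarrow> 'a::field mat \<Rightarrow> 'a mat" where
  "upperU n A = mat n n (\<lambda>(i,j). if i < j then A $$ (i,j) else if i = j then A $$ (i,j) / 2 else 0)"

definition hypX :: "nat \<Rightarrow> 'a::field mat \<Rightarrow> 'a mat" where
  "hypX n A = four_block_mat (1\<^sub>m n) (0\<^sub>m n 0) (upperU n A) (0\<^sub>m n 0)"

lemma hypX_carrier: "hypX n A \<in> carrier_mat (2 * n) n"
  unfolding hypX_def upperU_def by (auto simp: mult_2)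

lemma hypX_index: "i < 2 * n \<Longrightarrow> j < n \<Longrightarrow>
  hypX n A $$ (i, j) = (if i < n then (if i = j then 1 else 0) else upperU n A $$ (i - n, j))"
  unfolding hypX_def four_block_mat_def upperU_def by (auto simp: Let_def)

lemma hypX_gram: fixes A :: "'a::field mat" assumes A: "A \<in> carrier_mat n n" and sym: "transpose_mat A = A" and two: "(2::'a) \<noteq> 0"
  shows "transpose_mat (hypX n A) * hyp n * hypX n A = A"
proof -
  let ?U = "upperU n A"
  have U: "?U \<in> carrier_mat n n" unfolding upperU_def by simp
  have tX: "transpose_mat (hypX n A) = four_block_mat (1\<^sub>m n) (transpose_mat ?U) (0\<^sub>m 0 n) (0\<^sub>m 0 n)"
    unfolding hypX_def by (subst transpose_four_block_mat[OF one_carrier_mat zero_carrier_mat U zero_carrier_mat]) auto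
  have BX: "hyp n * hypX n A = four_block_mat ?U (0\<^sub>m n 0) (1\<^sub>m n) (0\<^sub>m n 0)"
    unfolding hyp_def hypX_def
    by (subst mult_four_block_mat[OF zero_carrier_mat one_carrier_mat one_carrier_mat zero_carrier_mat
          one_carrier_mat zero_carrier_mat U zero_carrier_mat]) (use U in auto)
  have "transpose_mat (hypX n A) * hyp n * hypX n A = transpose_mat (hypX n A) * (hyp n * hypX n A)"
    using hypX_carrier hyp_carrier by (metis assoc_mult_mat transpose_carrier_mat)
  also have "\<dots> = four_block_mat (1\<^sub>m n * ?U + transpose_mat ?U * 1\<^sub>m n) (1\<^sub>m n * 0\<^sub>m n 0 + transpose_mat ?U * 0\<^sub>m n 0)
      (0\<^sub>m 0 n * ?U + 0\<^sub>m 0 n * 1\<^sub>m n) (0\<^sub>m 0 n * 0\<^sub>m n 0 + 0\<^sub>m 0 n * 0\<^sub>m n 0)"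
    unfolding tX BX
    by (subst mult_four_block_mat[OF one_carrier_mat transpose_carrier_mat[THEN iffD2, OF U] zero_carrier_mat zero_carrier_mat
          U zero_carrier_mat one_carrier_mat zero_carrier_mat]) (rule refl)
  also have "\<dots> = A"
  proof (rule eq_matI)
    have symE: "A $$ (j, i) = A $$ (i, j)" if "i < n" "j < n" for i j
      using arg_cong[OF sym, of "\<lambda>M. M $$ (i, j)"] that A by simp
    fix i j assume ij: "i < dim_row A" "j < dim_col A"
    then have ij': "i < n" "j < n" using A by auto
    have "(1\<^sub>m n * ?U + transpose_mat ?U * 1\<^sub>m n) $$ (i, j) = ?U $$ (i, j) + ?U $$ (j, i)" using ij' U by simp
    also have "\<dots> = A $$ (i, j)"
      using ij' symE[of i j] two unfolding upperU_def by (cases "i < j"; cases "i = j"; simp)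
    finally show "four_block_mat (1\<^sub>m n * ?U + transpose_mat ?U * 1\<^sub>m n) (1\<^sub>m n * 0\<^sub>m n 0 + transpose_mat ?U * 0\<^sub>m n 0)
      (0\<^sub>m 0 n * ?U + 0\<^sub>m 0 n * 1\<^sub>m n) (0\<^sub>m 0 n * 0\<^sub>m n 0 + 0\<^sub>m 0 n * 0\<^sub>m n 0) $$ (i, j) = A $$ (i, j)"
      using ij' U unfolding four_block_mat_def Let_def by simp
  qed (use A U in auto)
  finally show ?thesis .
qed


lemma hypX_vec: assumes c: "c \<in> carrier_vec n" and i: "i < 2 * n"
  shows "(hypX n A *\<^sub>v c) $ i = (if i < n then c $ i else (upperU n A *\<^sub>v c) $ (i - n))"
proof -
  have "(hypX n A *\<^sub>v c) $ i = (\<Sum>j = 0..<n. hypX n A $$ (i, j) * c $ j)"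
    using hypX_carrier[of n A] c i by (simp add: scalar_prod_def)
  also have "\<dots> = (\<Sum>j = 0..<n. (if i < n then (if i = j then 1 else 0) else upperU n A $$ (i - n, j)) * c $ j)"
    using i by (intro sum.cong) (auto simp: hypX_index)
  also have "\<dots> = (if i < n then c $ i else (upperU n A *\<^sub>v c) $ (i - n))"
  proof (cases "i < n")
    case True
    have "(\<Sum>j = 0..<n. (if i < n then (if i = j then 1 else 0) else upperU n A $$ (i - n, j)) * c $ j)
      = (\<Sum>j = 0..<n. (if i = j then c $ j else 0))" using True by (intro sum.cong) auto
    also have "\<dots> = c $ i" using True by (simp add: sum.delta)
    finally show ?thesis using True by simp
  next
    case False then show ?thesis using c i by (simp add: scalar_prod_def upperU_def)
  qed
  finally show ?thesis .
qed

lemma hyp_universal: assumes dv: "discrete_valuation v" and nd: "nondyadic v"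
  shows "prim_n_universal v n (hyp n)"
  unfolding prim_n_universal_def
proof (intro allI impI)
  fix A assume L: "R_lattice v n A"
  then have A: "A \<in> carrier_mat n n" and sym: "transpose_mat A = A"
    and Aent: "\<And>i j. i < n \<Longrightarrow> j < n \<Longrightarrow> intR v (A $$ (i, j))"
    unfolding R_lattice_def by auto
  have two: "(2::'a) \<noteq> 0" using nd unfolding nondyadic_def by auto
  let ?U = "upperU n A" and ?X = "hypX n A"
  have Uent: "intR v (?U $$ (i, j))" if "i < n" "j < n" for i j
    using that Aent[of i j] intR_half[OF dv nd Aent[of i j]] unfolding upperU_def by auto
  have Xent: "intR v (?X $$ (i, j))" if "i < 2 * n" "j < n" for i j
    using that Uent[of "i - n" j] dv by (auto simp: hypX_index)
  have dB: "dim_row (hyp n :: 'a mat) = 2 * n" using hyp_carrier[of n] by auto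
  have dA: "dim_row A = n" using A by auto
  have rep: "representation v A (hyp n) ?X"
    unfolding representation_def dB dA
    using hypX_carrier Xent hypX_gram[OF A sym two] by auto
  define N where "N = {x \<in> R_vecs v (2 * n). \<forall>i<n. x $ i = 0}"
  have dcX: "dim_col ?X = n" using hypX_carrier[of n A] by auto
  have img: "rep_image v ?X = {?X *\<^sub>v c | c. c \<in> R_vecs v n}"
    unfolding rep_image_def dcX ..
  have Xc_R: "?X *\<^sub>v c \<in> R_vecs v (2 * n)" if c: "c \<in> R_vecs v n" for c
  proof -
    have cc: "c \<in> carrier_vec n" and ce: "\<And>j. j < n \<Longrightarrow> intR v (c $ j)" using c unfolding R_vecs_def by auto
    show ?thesis unfolding R_vecs_def
      using intR_mult_mat_vec[OF dv hypX_carrier cc Xent ce] hypX_carrier[of n A] cc by auto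
  qed
  have sub: "R_submodule v (2 * n) N"
    unfolding R_submodule_def N_def R_vecs_def
    by (auto intro!: intR_add[OF dv] intR_mult[OF dv])
  have ds: "direct_summand v (2 * n) (rep_image v ?X)"
    unfolding direct_summand_def
  proof (intro exI conjI)
    show "R_submodule v (2 * n) N" by (rule sub)
    show "rep_image v ?X \<inter> N = {0\<^sub>v (2 * n)}"
    proof
      show "{0\<^sub>v (2 * n)} \<subseteq> rep_image v ?X \<inter> N"
      proof -
        have "?X *\<^sub>v 0\<^sub>v n = 0\<^sub>v (2 * n)" using hypX_carrier[of n A] by (intro eq_vecI) auto
        moreover have "0\<^sub>v n \<in> R_vecs v n" unfolding R_vecs_def by simp
        ultimately have "0\<^sub>v (2 * n) \<in> rep_image v ?X" unfolding img by (metis (mono_tags, lifting) mem_Collect_eq)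
        moreover have "0\<^sub>v (2 * n) \<in> N" using sub unfolding R_submodule_def by auto
        ultimately show ?thesis by auto
      qed
      show "rep_image v ?X \<inter> N \<subseteq> {0\<^sub>v (2 * n)}"
      proof
        fix x assume "x \<in> rep_image v ?X \<inter> N"
        then obtain c where c: "c \<in> R_vecs v n" and x: "x = ?X *\<^sub>v c" and xN: "x \<in> N"
          unfolding img by auto
        have cc: "c \<in> carrier_vec n" using c unfolding R_vecs_def by auto
        have "c = 0\<^sub>v n"
        proof (rule eq_vecI)
          fix i assume "i < dim_vec (0\<^sub>v n :: 'a vec)"
          then have i: "i < n" by simp
          have "c $ i = x $ i" using hypX_vec[OF cc, of i A] i x by simp
          also have "\<dots> = 0" using xN i unfolding N_def by auto
          finally show "c $ i = 0\<^sub>v n $ i" using i by simp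
        qed (use cc in auto)
        then show "x \<in> {0\<^sub>v (2 * n)}" using x hypX_carrier[of n A] by (auto intro!: eq_vecI)
      qed
    qed
    show "R_vecs v (2 * n) = {x + y |x y. x \<in> rep_image v ?X \<and> y \<in> N}"
    proof
      show "{x + y |x y. x \<in> rep_image v ?X \<and> y \<in> N} \<subseteq> R_vecs v (2 * n)"
      proof
        fix z assume "z \<in> {x + y |x y. x \<in> rep_image v ?X \<and> y \<in> N}"
        then obtain c y where c: "c \<in> R_vecs v n" and y: "y \<in> N" and z: "z = ?X *\<^sub>v c + y"
          unfolding img by auto
        have "?X *\<^sub>v c \<in> R_vecs v (2 * n)" by (rule Xc_R[OF c])
        moreover have "y \<in> R_vecs v (2 * n)" using y unfolding N_def by auto
        ultimately show "z \<in> R_vecs v (2 * n)" unfolding z R_vecs_def by (auto intro!: intR_add[OF dv])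
      qed
      show "R_vecs v (2 * n) \<subseteq> {x + y |x y. x \<in> rep_image v ?X \<and> y \<in> N}"
      proof
        fix z assume z: "z \<in> R_vecs v (2 * n)"
        define c where "c = vec n (\<lambda>i. z $ i)"
        have c: "c \<in> R_vecs v n" using z unfolding c_def R_vecs_def by auto
        have cc: "c \<in> carrier_vec n" unfolding c_def by simp
        have XcR: "?X *\<^sub>v c \<in> R_vecs v (2 * n)" by (rule Xc_R[OF c])
        define y where "y = z - ?X *\<^sub>v c"
        have yN: "y \<in> N"
          unfolding N_def
        proof (intro CollectI conjI allI impI)
          show "y \<in> R_vecs v (2 * n)" unfolding R_vecs_def
          proof (intro CollectI conjI allI impI)
            show "y \<in> carrier_vec (2 * n)" using z XcR unfolding y_def R_vecs_def by auto
            fix i assume i: "i < 2 * n"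
            have dXc: "dim_vec (?X *\<^sub>v c) = 2 * n" using hypX_carrier[of n A] by simp
            have "y $ i = z $ i - (?X *\<^sub>v c) $ i" unfolding y_def by (rule index_minus_vec(1), use i dXc in simp)
            then show "intR v (y $ i)" using z XcR i unfolding R_vecs_def by (auto intro!: intR_diff[OF dv])
          qed
          fix i assume i: "i < n"
          show "y $ i = 0" unfolding y_def using z i hypX_vec[OF cc, of i A] hypX_carrier[of n A]
            unfolding R_vecs_def c_def by auto
        qed
        have dXc2: "dim_vec (?X *\<^sub>v c) = 2 * n" using hypX_carrier[of n A] by simp
        have dz: "dim_vec z = 2 * n" using z unfolding R_vecs_def by auto
        have "z = ?X *\<^sub>v c + y" unfolding y_def by (rule eq_vecI) (use dXc2 dz in auto)
        then show "z \<in> {x + y |x y. x \<in> rep_image v ?X \<and> y \<in> N}"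
          using yN c unfolding img by blast
      qed
    qed
  qed
  have "primitive_representation v A (hyp n) ?X"
    unfolding primitive_representation_def dB using rep ds by simp
  then show "\<exists>X. primitive_representation v A (hyp n) X" by blast
qed


section \<open>Lower bound\<close>

lemma smult_one_mat_vec: assumes w: "(w :: 'a::field vec) \<in> carrier_vec n"
  shows "(c \<cdot>\<^sub>m 1\<^sub>m n) *\<^sub>v w = c \<cdot>\<^sub>v w"
proof (rule eq_vecI)
  fix i assume "i < dim_vec (c \<cdot>\<^sub>v w)"
  then have i: "i < n" using w by simp
  have "((c \<cdot>\<^sub>m 1\<^sub>m n) *\<^sub>v w) $ i = (\<Sum>j = 0..<n. (c \<cdot>\<^sub>m 1\<^sub>m n) $$ (i, j) * w $ j)"
    using i w by (auto simp: scalar_prod_def intro!: sum.cong)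
  also have "\<dots> = (\<Sum>j = 0..<n. (if i = j then c * w $ j else 0))"
    using i by (intro sum.cong) auto
  also have "\<dots> = c * w $ i" using i by (simp add: sum.delta)
  finally show "((c \<cdot>\<^sub>m 1\<^sub>m n) *\<^sub>v w) $ i = (c \<cdot>\<^sub>v w) $ i" using i w by simp
qed (use w in auto)

lemma submodule_mat_vec:
  assumes dv: "discrete_valuation v" and N: "R_submodule v m N" and M: "M \<in> carrier_mat m k"
    and cols: "\<And>i. i < k \<Longrightarrow> col M i \<in> N"
    and r: "r \<in> carrier_vec k" and re: "\<And>i. i < k \<Longrightarrow> intR v (r $ i)"
  shows "M *\<^sub>v r \<in> N"
proof -
  define tr where "tr l = vec k (\<lambda>i. if i < l then r $ i else 0)" for l
  have add: "x + y \<in> N" if "x \<in> N" "y \<in> N" for x y using N that unfolding R_submodule_def by blast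
  have sm: "a \<cdot>\<^sub>v x \<in> N" if "intR v a" "x \<in> N" for a x using N that unfolding R_submodule_def by blast
  have z: "0\<^sub>v m \<in> N" using N unfolding R_submodule_def by blast
  have "M *\<^sub>v tr l \<in> N" for l
  proof (induction l)
    case 0
    have "M *\<^sub>v tr 0 = 0\<^sub>v m" using M by (intro eq_vecI) (auto simp: tr_def scalar_prod_def)
    then show ?case using z by simp
  next
    case (Suc l)
    show ?case
    proof (cases "l < k")
      case False
      then have "tr (Suc l) = tr l" unfolding tr_def by (intro eq_vecI) auto
      then show ?thesis using Suc by simp
    next
      case True
      have "M *\<^sub>v tr (Suc l) = M *\<^sub>v tr l + r $ l \<cdot>\<^sub>v col M l"
      proof (rule eq_vecI)
        fix i assume "i < dim_vec (M *\<^sub>v tr l + r $ l \<cdot>\<^sub>v col M l)"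
        then have i: "i < m" using M by simp
        have "(M *\<^sub>v tr (Suc l)) $ i = (\<Sum>j = 0..<k. M $$ (i, j) * (if j < Suc l then r $ j else 0))"
          using i M by (simp add: tr_def scalar_prod_def)
        also have "\<dots> = (\<Sum>j = 0..<k. M $$ (i, j) * (if j < l then r $ j else 0) + (if j = l then M $$ (i, l) * r $ l else 0))"
          by (intro sum.cong) auto
        also have "\<dots> = (\<Sum>j = 0..<k. M $$ (i, j) * (if j < l then r $ j else 0)) + M $$ (i, l) * r $ l"
          using True by (simp add: sum.distrib sum.delta)
        also have "\<dots> = (M *\<^sub>v tr l + r $ l \<cdot>\<^sub>v col M l) $ i"
          using i M True by (simp add: tr_def scalar_prod_def)
        finally show "(M *\<^sub>v tr (Suc l)) $ i = (M *\<^sub>v tr l + r $ l \<cdot>\<^sub>v col M l) $ i" .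
      qed (use M in auto)
      then show ?thesis using Suc add sm re[OF True] cols[OF True] by simp
    qed
  qed
  moreover have "tr k = r" unfolding tr_def using r by (intro eq_vecI) auto
  ultimately show ?thesis by metis
qed


lemma mat_vec_unit: fixes X :: "'a::field mat" assumes X: "X \<in> carrier_mat m n" and j: "j < n"
  shows "X *\<^sub>v unit_vec n j = col X j"
  by (rule eq_vecI) (use X j scalar_prod_right_unit[OF j] in auto)

lemma left_inverse:
  fixes X B :: "'a::field mat"
  assumes dv: "discrete_valuation v" and B: "B \<in> carrier_mat m m" and X: "X \<in> carrier_mat m n"
    and Xent: "\<And>i j. i < m \<Longrightarrow> j < n \<Longrightarrow> intR v (X $$ (i, j))"
    and gram: "transpose_mat X * B * X = c \<cdot>\<^sub>m 1\<^sub>m n" and c: "c \<noteq> 0"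
    and ds: "direct_summand v m (rep_image v X)"
  shows "\<exists>Y. Y \<in> carrier_mat n m \<and> (\<forall>i<n. \<forall>j<m. intR v (Y $$ (i, j))) \<and> Y * X = 1\<^sub>m n"
proof -
  obtain N where N: "R_submodule v m N" and SN: "rep_image v X \<inter> N = {0\<^sub>v m}"
    and sum: "R_vecs v m = {x + y | x y. x \<in> rep_image v X \<and> y \<in> N}"
    using ds unfolding direct_summand_def by blast
  have dcX: "dim_col X = n" using X by auto
  have img: "rep_image v X = {X *\<^sub>v cc | cc. cc \<in> R_vecs v n}"
    unfolding rep_image_def dcX ..
  have NR: "N \<subseteq> R_vecs v m" using N unfolding R_submodule_def by auto
  have "\<forall>i. \<exists>cc. i < m \<longrightarrow> cc \<in> R_vecs v n \<and> unit_vec m i - X *\<^sub>v cc \<in> N"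
  proof
    fix i
    show "\<exists>cc. i < m \<longrightarrow> cc \<in> R_vecs v n \<and> unit_vec m i - X *\<^sub>v cc \<in> N"
    proof (cases "i < m")
      case True
      have "unit_vec m i \<in> R_vecs v m" unfolding R_vecs_def using dv by (auto simp: unit_vec_def)
      then obtain x y where x: "x \<in> rep_image v X" and y: "y \<in> N" and e: "unit_vec m i = x + y"
        unfolding sum by blast
      obtain cc where cc: "cc \<in> R_vecs v n" and xc: "x = X *\<^sub>v cc" using x unfolding img by blast
      have yc: "y \<in> carrier_vec m" using y NR unfolding R_vecs_def by auto
      have xcar: "x \<in> carrier_vec m" using xc X cc unfolding R_vecs_def by auto
      have "unit_vec m i - X *\<^sub>v cc = y" unfolding e xc[symmetric]
        by (rule eq_vecI) (use yc xcar in auto)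
      then show ?thesis using cc y by auto
    qed auto
  qed
  then obtain f where f: "\<And>i. i < m \<Longrightarrow> f i \<in> R_vecs v n \<and> unit_vec m i - X *\<^sub>v f i \<in> N"
    by metis
  have fc: "f i \<in> carrier_vec n" if "i < m" for i using f[OF that] unfolding R_vecs_def by auto
  have fe: "intR v (f i $ j)" if "i < m" "j < n" for i j using f[OF that(1)] that(2) unfolding R_vecs_def by auto
  define Y where "Y = mat n m (\<lambda>(j, i). f i $ j)"
  have Y: "Y \<in> carrier_mat n m" unfolding Y_def by simp
  have Yent: "\<forall>i<n. \<forall>j<m. intR v (Y $$ (i, j))" unfolding Y_def using fe by auto
  have colY: "col Y i = f i" if "i < m" for i
    unfolding Y_def by (rule eq_vecI) (use fc[OF that] that in auto)
  define Yn where "Yn = 1\<^sub>m m - X * Y"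
  have Yn: "Yn \<in> carrier_mat m m" unfolding Yn_def using X Y by auto
  have colYn: "col Yn i \<in> N" if i: "i < m" for i
  proof -
    have "col Yn i = unit_vec m i - X *\<^sub>v f i"
      unfolding Yn_def
    proof (rule eq_vecI)
      fix k assume "k < dim_vec (unit_vec m i - X *\<^sub>v f i)"
      then have k: "k < m" using X by simp
      have "col (1\<^sub>m m - X * Y) i $ k = (1\<^sub>m m - X * Y) $$ (k, i)" using k i X Y by simp
      also have "\<dots> = 1\<^sub>m m $$ (k, i) - (X * Y) $$ (k, i)" using k i X Y by simp
      also have "(X * Y) $$ (k, i) = (X *\<^sub>v col Y i) $ k" using k i X Y by simp
      finally show "col (1\<^sub>m m - X * Y) i $ k = (unit_vec m i - X *\<^sub>v f i) $ k"
        using k i X colY[OF i] by (simp add: unit_vec_def)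
    qed (use X Y in auto)
    then show ?thesis using f[OF i] by simp
  qed
  have key: "Y *\<^sub>v col X j = unit_vec n j" if j: "j < n" for j
  proof -
    let ?r = "col X j"
    have rc: "?r \<in> carrier_vec m" using X by auto
    have re: "intR v (?r $ i)" if "i < m" for i using Xent[OF that j] that j X by simp
    have YnN: "Yn *\<^sub>v ?r \<in> N" by (rule submodule_mat_vec[OF dv N Yn colYn rc re])
    define w where "w = unit_vec n j - Y *\<^sub>v ?r"
    have Yr: "Y *\<^sub>v ?r \<in> carrier_vec n" using Y rc by auto
    have wc: "w \<in> carrier_vec n" unfolding w_def using Yr by auto
    have wR: "w \<in> R_vecs v n" unfolding R_vecs_def
    proof (intro CollectI conjI allI impI)
      show "w \<in> carrier_vec n" by (rule wc)
      fix i assume i: "i < n"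
      have "w $ i = unit_vec n j $ i - (Y *\<^sub>v ?r) $ i" unfolding w_def using i Yr Y by simp
      moreover have "intR v ((Y *\<^sub>v ?r) $ i)"
        by (rule intR_mult_mat_vec[OF dv Y rc _ re i]) (use Yent in auto)
      moreover have "intR v (unit_vec n j $ i)" using dv i by (auto simp: unit_vec_def)
      ultimately show "intR v (w $ i)" using intR_diff[OF dv] by simp
    qed
    have "X *\<^sub>v w = X *\<^sub>v unit_vec n j - X *\<^sub>v (Y *\<^sub>v ?r)"
      unfolding w_def by (rule mult_minus_distrib_mat_vec[OF X _ Yr]) simp
    also have "\<dots> = ?r - (X * Y) *\<^sub>v ?r" using mat_vec_unit[OF X j] X Y rc by simp
    also have "\<dots> = Yn *\<^sub>v ?r" unfolding Yn_def
      using minus_mult_distrib_mat_vec[OF one_carrier_mat _ rc, of "X * Y"] X Y rc by simp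
    finally have Xw: "X *\<^sub>v w = Yn *\<^sub>v ?r" .
    have "X *\<^sub>v w \<in> rep_image v X" unfolding img using wR by blast
    then have "X *\<^sub>v w \<in> rep_image v X \<inter> N" using YnN Xw by simp
    then have Xw0: "X *\<^sub>v w = 0\<^sub>v m" using SN by blast
    have "(transpose_mat X * B * X) *\<^sub>v w = transpose_mat X *\<^sub>v (B *\<^sub>v (X *\<^sub>v w))"
    proof -
      have tX: "transpose_mat X \<in> carrier_mat n m" using X by simp
      have "(transpose_mat X * B * X) *\<^sub>v w = (transpose_mat X * B) *\<^sub>v (X *\<^sub>v w)"
        by (rule assoc_mult_mat_vec[OF mult_carrier_mat[OF tX B] X wc])
      also have "\<dots> = transpose_mat X *\<^sub>v (B *\<^sub>v (X *\<^sub>v w))"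
        by (rule assoc_mult_mat_vec[OF tX B]) (use X wc in simp)
      finally show ?thesis .
    qed
    also have "\<dots> = 0\<^sub>v n" unfolding Xw0 using X B
      by (intro eq_vecI) (auto simp: scalar_prod_def)
    finally have "c \<cdot>\<^sub>v w = 0\<^sub>v n" unfolding gram smult_one_mat_vec[OF wc] .
    then have "w = 0\<^sub>v n"
      using c wc by (intro eq_vecI) (auto dest!: arg_cong[of _ _ "\<lambda>x. x $ _"] simp: vec_eq_iff)
    then show ?thesis unfolding w_def
      by (intro eq_vecI) (auto dest!: arg_cong[of _ _ "\<lambda>x. x $ _"] simp: vec_eq_iff)
  qed
  have "Y * X = 1\<^sub>m n"
  proof (rule eq_matI)
    fix i j assume "i < dim_row (1\<^sub>m n :: 'a mat)" "j < dim_col (1\<^sub>m n :: 'a mat)"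
    then have ij: "i < n" "j < n" by auto
    have "(Y * X) $$ (i, j) = (Y *\<^sub>v col X j) $ i" using ij X Y by simp
    then show "(Y * X) $$ (i, j) = 1\<^sub>m n $$ (i, j)" using key[OF ij(2)] ij by simp
  qed (use X Y in auto)
  then show ?thesis using Y Yent by blast
qed


lemma intR_power: "discrete_valuation v \<Longrightarrow> intR v x \<Longrightarrow> intR v (x ^ k)"
  by (induction k) (auto intro: intR_mult)

lemma intR_adj: assumes dv: "discrete_valuation v" and B: "B \<in> carrier_mat m m"
  and ent: "\<And>i j. i < m \<Longrightarrow> j < m \<Longrightarrow> intR v (B $$ (i, j))"
  and i: "i < m" and j: "j < m"
  shows "intR v (adj_mat B $$ (i, j))"
proof -
  have "adj_mat B $$ (i, j) = (-1) ^ (j + i) * det (mat_delete B j i)"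
    using B i j unfolding adj_mat_def cofactor_def by simp
  moreover have "intR v (det (mat_delete B j i))"
  proof (rule intR_det[OF dv mat_delete_carrier[OF B]])
    fix i' j' assume "i' < m - 1" "j' < m - 1"
    then show "intR v (mat_delete B j i $$ (i', j'))"
      using B ent unfolding mat_delete_def by auto
  qed
  moreover have "intR v ((-1) ^ (j + i))" using dv by (intro intR_power intR_neg) auto
  ultimately show ?thesis using intR_mult[OF dv] by simp
qed

lemma sum_split2: "(\<Sum>j = 0..<2 * (n::nat). f j) = (\<Sum>j = 0..<n. f j) + (\<Sum>j = 0..<n. f (j + n))"
proof -
  have "{0..<2 * n} = {0..<n} \<union> {n..<n + n}" by auto
  then have "(\<Sum>j = 0..<2 * n. f j) = (\<Sum>j = 0..<n. f j) + (\<Sum>j = n..<n + n. f j)"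
    by (simp add: sum.union_disjoint)
  also have "(\<Sum>j = n..<n + n. f j) = (\<Sum>j = 0..<n. f (j + n))"
    using sum.shift_bounds_nat_ivl[of f 0 n n] by simp
  finally show ?thesis .
qed

lemma bilin_expand:
  fixes P B X Z :: "'a::field mat"
  assumes P: "P \<in> carrier_mat n m" and B: "B \<in> carrier_mat m m" and X: "X \<in> carrier_mat m n"
    and Z: "Z \<in> carrier_mat m n" and a: "a \<in> carrier_vec n" and b: "b \<in> carrier_vec n"
  shows "P *\<^sub>v (B *\<^sub>v (X *\<^sub>v a + Z *\<^sub>v b)) = (P * B * X) *\<^sub>v a + (P * B * Z) *\<^sub>v b"
proof -
  have PB: "P * B \<in> carrier_mat n m" using P B by simp
  have "(P * B * X) *\<^sub>v a = P *\<^sub>v (B *\<^sub>v (X *\<^sub>v a))"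
    using assoc_mult_mat_vec[OF PB X a] assoc_mult_mat_vec[OF P B, of "X *\<^sub>v a"] X a by simp
  moreover have "(P * B * Z) *\<^sub>v b = P *\<^sub>v (B *\<^sub>v (Z *\<^sub>v b))"
    using assoc_mult_mat_vec[OF PB Z b] assoc_mult_mat_vec[OF P B, of "Z *\<^sub>v b"] Z b by simp
  moreover have "B *\<^sub>v (X *\<^sub>v a + Z *\<^sub>v b) = B *\<^sub>v (X *\<^sub>v a) + B *\<^sub>v (Z *\<^sub>v b)"
    by (rule mult_add_distrib_mat_vec[OF B]) (use X Z a b in auto)
  moreover have "P *\<^sub>v (B *\<^sub>v (X *\<^sub>v a) + B *\<^sub>v (Z *\<^sub>v b)) = P *\<^sub>v (B *\<^sub>v (X *\<^sub>v a)) + P *\<^sub>v (B *\<^sub>v (Z *\<^sub>v b))"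
    by (rule mult_add_distrib_mat_vec[OF P]) (use B X Z a b in auto)
  ultimately show ?thesis by simp
qed


lemma lower_bound:
  fixes B :: "'a::field mat"
  assumes dv: "discrete_valuation v" and L: "R_lattice v m B" and U: "prim_n_universal v n B"
  shows "2 * n \<le> m"
proof (rule ccontr)
  assume "\<not> 2 * n \<le> m"
  then have mn: "m < 2 * n" by simp
  have B: "B \<in> carrier_mat m m" and symB: "transpose_mat B = B"
    and Bent: "\<And>i j. i < m \<Longrightarrow> j < m \<Longrightarrow> intR v (B $$ (i, j))" and dB: "det B \<noteq> 0"
    using L unfolding R_lattice_def by auto
  obtain p where p: "p \<noteq> 0" "v p = 1" using dv unfolding discrete_valuation_def by blast
  define \<delta> where "\<delta> = det B"
  define k where "k = nat (2 * v \<delta>) + 1"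
  define c where "c = p ^ k"
  have c0: "c \<noteq> 0" unfolding c_def using p by simp
  have vc: "v c = int k" unfolding c_def using dv_power[OF dv p(1)] p by simp
  have cR: "intR v c" unfolding intR_def vge_def using vc by simp
  define A where "A = c \<cdot>\<^sub>m (1\<^sub>m n :: 'a mat)"
  have Acar: "A \<in> carrier_mat n n" unfolding A_def by simp
  have LA: "R_lattice v n A" unfolding R_lattice_def
  proof (intro conjI allI impI)
    show "A \<in> carrier_mat n n" by (rule Acar)
    show "transpose_mat A = A" unfolding A_def by (rule eq_matI) auto
    show "det A \<noteq> 0" unfolding A_def using c0 by simp
    fix i j assume "i < n" "j < n"
    then show "intR v (A $$ (i, j))" unfolding A_def using cR by auto
  qed
  obtain X where X: "primitive_representation v A B X" using U LA unfolding prim_n_universal_def by blast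
  have dimB: "dim_row B = m" using B by simp
  have dimA: "dim_row A = n" using Acar by simp
  have Xc: "X \<in> carrier_mat m n" and Xent: "\<And>i j. i < m \<Longrightarrow> j < n \<Longrightarrow> intR v (X $$ (i, j))"
    and gram: "transpose_mat X * B * X = c \<cdot>\<^sub>m 1\<^sub>m n" and ds: "direct_summand v m (rep_image v X)"
    using X unfolding primitive_representation_def representation_def dimB dimA A_def by auto
  obtain Y where Y: "Y \<in> carrier_mat n m" and Yent: "\<forall>i<n. \<forall>j<m. intR v (Y $$ (i, j))"
    and YX: "Y * X = 1\<^sub>m n"
    using left_inverse[OF dv B Xc Xent gram c0 ds] by blast
  have adj: "adj_mat B \<in> carrier_mat m m" "B * adj_mat B = \<delta> \<cdot>\<^sub>m 1\<^sub>m m"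
    using adj_mat[OF B] unfolding \<delta>_def by auto
  define Z where "Z = adj_mat B * transpose_mat Y"
  have Zc: "Z \<in> carrier_mat m n" unfolding Z_def using adj Y by simp
  have Zent: "intR v (Z $$ (i, j))" if "i < m" "j < n" for i j
    unfolding Z_def
    by (rule intR_mult_mat[OF dv adj(1) _ intR_adj[OF dv B Bent] _ that]) (use Y Yent in auto)
  have tX: "transpose_mat X \<in> carrier_mat n m" using Xc by simp
  have tY: "transpose_mat Y \<in> carrier_mat m n" using Y by simp
  have XBZ: "transpose_mat X * B * Z = \<delta> \<cdot>\<^sub>m 1\<^sub>m n"
  proof -
    have "transpose_mat X * B * Z = transpose_mat X * (B * adj_mat B) * transpose_mat Y"
      unfolding Z_def using assoc_mult_mat[OF mult_carrier_mat[OF tX B] adj(1) tY]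
        assoc_mult_mat[OF tX B adj(1)] by simp
    also have "\<dots> = transpose_mat X * (\<delta> \<cdot>\<^sub>m 1\<^sub>m m) * transpose_mat Y" unfolding adj(2) ..
    also have "\<dots> = \<delta> \<cdot>\<^sub>m (transpose_mat X * transpose_mat Y)"
      using mult_smult_distrib[OF tX one_carrier_mat, of \<delta>] mult_smult_assoc_mat[OF mult_carrier_mat[OF tX one_carrier_mat] tY, of \<delta>]
        tX by simp
    also have "transpose_mat X * transpose_mat Y = transpose_mat (Y * X)"
      using transpose_mult[OF Y Xc] by simp
    also have "\<dots> = 1\<^sub>m n" unfolding YX by simp
    finally show ?thesis .
  qed
  have ZBX: "transpose_mat Z * B * X = \<delta> \<cdot>\<^sub>m 1\<^sub>m n"
  proof -
    have "transpose_mat (transpose_mat X * B * Z) = transpose_mat Z * transpose_mat (transpose_mat X * B)"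
      by (rule transpose_mult[OF mult_carrier_mat[OF tX B] Zc])
    also have "transpose_mat (transpose_mat X * B) = transpose_mat B * X"
      using transpose_mult[OF tX B] by simp
    also have "transpose_mat Z * (transpose_mat B * X) = transpose_mat Z * B * X"
      unfolding symB using assoc_mult_mat[OF transpose_carrier_mat[THEN iffD2, OF Zc] B Xc] by simp
    finally have "transpose_mat Z * B * X = transpose_mat (\<delta> \<cdot>\<^sub>m 1\<^sub>m n)" unfolding XBZ by simp
    also have "\<dots> = \<delta> \<cdot>\<^sub>m 1\<^sub>m n" by (rule eq_matI) auto
    finally show ?thesis .
  qed
  define C where "C = transpose_mat Z * B * Z"
  have Cc: "C \<in> carrier_mat n n" unfolding C_def using Zc B by simp
  have Cent: "intR v (C $$ (i, j))" if "i < n" "j < n" for i j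
  proof -
    have tZ: "transpose_mat Z \<in> carrier_mat n m" using Zc by simp
    have "intR v ((transpose_mat Z * B) $$ (i', j'))" if "i' < n" "j' < m" for i' j'
      by (rule intR_mult_mat[OF dv tZ B _ Bent that]) (use Zc Zent in auto)
    then show ?thesis unfolding C_def
      by (intro intR_mult_mat[OF dv mult_carrier_mat[OF tZ B] Zc _ Zent that]) auto
  qed
  have tZ: "transpose_mat Z \<in> carrier_mat n m" using Zc by simp
  define Q where "Q = mat (2 * n) (2 * n) (\<lambda>(i, j). if i < m then (if j < n then X $$ (i, j) else Z $$ (i, j - n)) else 0)"
  have Qc: "Q \<in> carrier_mat (2 * n) (2 * n)" unfolding Q_def by simp
  have "det Q = 0"
    unfolding det_def'[OF Qc]
  proof (rule sum.neutral, intro ballI)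
    fix pp assume "pp \<in> {pp. pp permutes {0..<2 * n}}"
    have "Q $$ (2 * n - 1, pp (2 * n - 1)) = 0"
    proof -
      have "pp (2 * n - 1) < 2 * n"
        using \<open>pp \<in> _\<close> permutes_in_image[of pp "{0..<2 * n}" "2 * n - 1"] mn by auto
      then show ?thesis unfolding Q_def using mn by simp
    qed
    then have "(\<Prod>i = 0..<2 * n. Q $$ (i, pp i)) = 0"
      using mn by (intro prod_zero) (auto intro!: bexI[of _ "2 * n - 1"])
    then show "signof pp * (\<Prod>i = 0..<2 * n. Q $$ (i, pp i)) = 0" by simp
  qed
  then obtain w where wc: "w \<in> carrier_vec (2 * n)" and w0: "w \<noteq> 0\<^sub>v (2 * n)" and Qw: "Q *\<^sub>v w = 0\<^sub>v (2 * n)"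
    using det_0_iff_vec_prod_zero_field[OF Qc] by blast
  define a where "a = vec n (\<lambda>i. w $ i)"
  define b where "b = vec n (\<lambda>i. w $ (i + n))"
  have ac: "a \<in> carrier_vec n" and bc: "b \<in> carrier_vec n" unfolding a_def b_def by auto
  have u0: "X *\<^sub>v a + Z *\<^sub>v b = 0\<^sub>v m"
  proof (rule eq_vecI)
    fix i assume "i < dim_vec (0\<^sub>v m :: 'a vec)"
    then have i: "i < m" by simp
    have "(Q *\<^sub>v w) $ i = (\<Sum>j = 0..<2 * n. Q $$ (i, j) * w $ j)"
      using i mn Qc wc by (simp add: scalar_prod_def)
    also have "\<dots> = (\<Sum>j = 0..<n. Q $$ (i, j) * w $ j) + (\<Sum>j = 0..<n. Q $$ (i, j + n) * w $ (j + n))"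
      by (rule sum_split2)
    also have "\<dots> = (X *\<^sub>v a + Z *\<^sub>v b) $ i"
      using i mn Xc Zc ac bc by (simp add: scalar_prod_def Q_def a_def b_def)
    finally show "(X *\<^sub>v a + Z *\<^sub>v b) $ i = 0\<^sub>v m $ i" using Qw i mn by simp
  qed (use Xc Zc in auto)
  have B0: "B *\<^sub>v 0\<^sub>v m = 0\<^sub>v m" using B by (intro eq_vecI) (auto simp: scalar_prod_def)
  have P0: "P *\<^sub>v 0\<^sub>v m = 0\<^sub>v n" if "P \<in> carrier_mat n m" for P :: "'a mat"
    using that by (intro eq_vecI) (auto simp: scalar_prod_def)
  have e1: "c \<cdot>\<^sub>v a + \<delta> \<cdot>\<^sub>v b = 0\<^sub>v n"
    using bilin_expand[OF tX B Xc Zc ac bc] unfolding u0 B0 P0[OF tX] gram XBZ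
      smult_one_mat_vec[OF ac] smult_one_mat_vec[OF bc] by simp
  have e2: "\<delta> \<cdot>\<^sub>v a + C *\<^sub>v b = 0\<^sub>v n"
    using bilin_expand[OF tZ B Xc Zc ac bc] unfolding u0 B0 P0[OF tZ] ZBX C_def[symmetric]
      smult_one_mat_vec[OF ac] by simp
  have c1: "c * a $ l + \<delta> * b $ l = 0" if "l < n" for l
    using arg_cong[OF e1, of "\<lambda>x. x $ l"] that ac bc by simp
  have c2: "\<delta> * a $ l + (C *\<^sub>v b) $ l = 0" if "l < n" for l
    using arg_cong[OF e2, of "\<lambda>x. x $ l"] that ac bc Cc by simp
  have "\<exists>l<n. b $ l \<noteq> 0"
  proof (rule ccontr)
    assume "\<not> (\<exists>l<n. b $ l \<noteq> 0)"
    then have b0: "\<And>l. l < n \<Longrightarrow> b $ l = 0" by auto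
    then have a0: "\<And>l. l < n \<Longrightarrow> a $ l = 0" using c1 c0 by fastforce
    have "w = 0\<^sub>v (2 * n)"
    proof (rule eq_vecI)
      fix i assume "i < dim_vec (0\<^sub>v (2 * n) :: 'a vec)"
      then have i: "i < 2 * n" by simp
      show "w $ i = 0\<^sub>v (2 * n) $ i"
      proof (cases "i < n")
        case True then show ?thesis using a0[OF True] i unfolding a_def by simp
      next
        case False
        then have "i - n < n" using i by simp
        then show ?thesis using b0[of "i - n"] False i unfolding b_def by simp
      qed
    qed (use wc in auto)
    then show False using w0 by simp
  qed
  define S where "S = {l. l < n \<and> b $ l \<noteq> 0}"
  have Sfin: "finite S" unfolding S_def by simp
  have Sne: "S \<noteq> {}" unfolding S_def using \<open>\<exists>l<n. b $ l \<noteq> 0\<close> by auto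
  define M where "M = Min ((\<lambda>l. v (b $ l)) ` S)"
  have "M \<in> (\<lambda>l. v (b $ l)) ` S" unfolding M_def using Sfin Sne by (intro Min_in) auto
  then obtain l0 where l0: "l0 \<in> S" and Ml0: "v (b $ l0) = M" by auto
  have Mle: "M \<le> v (b $ l)" if "l \<in> S" for l unfolding M_def using Sfin that by simp
  have l0n: "l0 < n" and bl0: "b $ l0 \<noteq> 0" using l0 unfolding S_def by auto
  have vgeb: "vge v (b $ j) M" if "j < n" for j
    using Mle[of j] that unfolding vge_def S_def by auto
  have vgeCb: "vge v ((C *\<^sub>v b) $ l0) M"
  proof -
    have "(C *\<^sub>v b) $ l0 = (\<Sum>j = 0..<n. C $$ (l0, j) * b $ j)"
      using l0n Cc bc by (simp add: scalar_prod_def)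
    moreover have "vge v (\<Sum>j = 0..<n. C $$ (l0, j) * b $ j) M"
    proof (rule vge_sum[OF dv])
      fix j assume "j \<in> {0..<n}"
      then have j: "j < n" by simp
      have "vge v (C $$ (l0, j)) 0" using Cent[OF l0n j] unfolding intR_def .
      from vge_mult[OF dv this vgeb[OF j]] show "vge v (C $$ (l0, j) * b $ j) M" by simp
    qed
    ultimately show ?thesis by simp
  qed
  let ?y = "(C *\<^sub>v b) $ l0"
  have "c * ?y = c * (\<delta> * a $ l0 + ?y) - \<delta> * (c * a $ l0 + \<delta> * b $ l0) + \<delta> * \<delta> * b $ l0"
    by (simp add: algebra_simps)
  then have eq: "c * ?y = \<delta> * \<delta> * b $ l0" using c1[OF l0n] c2[OF l0n] by simp
  have d0: "\<delta> \<noteq> 0" unfolding \<delta>_def by (rule dB)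
  have nz: "\<delta> * \<delta> * b $ l0 \<noteq> 0" using d0 bl0 by simp
  have v1: "v (\<delta> * \<delta> * b $ l0) = v \<delta> + v \<delta> + M"
    using dv_mult[OF dv, of "\<delta> * \<delta>" "b $ l0"] dv_mult[OF dv d0 d0] d0 bl0 Ml0 by simp
  have vgec: "vge v c (int k)" unfolding vge_def using vc by simp
  have "vge v (c * ?y) (int k + M)" by (rule vge_mult[OF dv vgec vgeCb])
  then have "int k + M \<le> v \<delta> + v \<delta> + M" using eq nz v1 unfolding vge_def by simp
  moreover have "int k > 2 * v \<delta>" unfolding k_def by simp
  ultimately show False by simp
qed


theorem mainTheorem1:
  fixes v :: "'a::field \<Rightarrow> int" and n :: nat
  assumes "nonarch_local_field v" and "nondyadic v" and "0 < n"
  shows "(\<exists>B. R_lattice v (2 * n) B \<and> prim_n_universal v n B) \<and> u_star v n = 2 * n"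
proof -
  have dv: "discrete_valuation v" using assms(1) unfolding nonarch_local_field_def by simp
  have ex: "R_lattice v (2 * n) (hyp n :: 'a mat) \<and> prim_n_universal v n (hyp n :: 'a mat)"
    using hyp_lattice[OF dv] hyp_universal[OF dv assms(2)] by blast
  have "u_star v n = 2 * n"
    unfolding u_star_def
  proof (rule Least_equality)
    show "\<exists>B. R_lattice v (2 * n) B \<and> prim_n_universal v n B" using ex by blast
    fix m assume "\<exists>B. R_lattice v m B \<and> prim_n_universal v n B"
    then obtain B where "R_lattice v m B" "prim_n_universal v n B" by blast
    then show "2 * n \<le> m" using lower_bound[OF dv] by blast
  qed
  then show ?thesis using ex by blast
qed

end
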